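(* Let $(M^n)_{n\in\mathbb{N}}$ be a sequence of nonnegative matrices in $\mathbb{R}^{p\times q}_+$ converging (entrywise) to $M\in\mathbb{R}^{p\times q}_+$, and suppose $\operatorname{rank}_{\mathrm{psd}}(M^n)\le k$ for all $n$. Then $\operatorname{rank}_{\mathrm{psd}}(M)\le k$.
   Context: $\mathcal{S}^k_+$ denotes the cone of $k\times k$ real symmetric positive semidefinite matrices, with inner product $\langle A,B\rangle = \operatorname{trace}(AB)$. A psd factorization of size $k$ of a nonnegative matrix $M\in\mathbb{R}^{p\times q}_+$ is a collection $A_1,\dots,A_p, B_1,\dots,B_q \in \mathcal{S}^k_+$ with $M_{ij} = \langle A_i, B_j\rangle$ for all $i,j$; the psd rank $\operatorname{rank}_{\mathrm{psd}}(M)$ is the smallest $k$ for which such a factorization exists. *)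

theory Defs
  imports Complex_Main
begin

text \<open>Matrices are represented as functions nat => nat => real, only the entries
  with indices below the stated dimensions being relevant.\<close>

definition psd_mat :: "nat \<Rightarrow> (nat \<Rightarrow> nat \<Rightarrow> real) \<Rightarrow> bool" where
  "psd_mat k A \<longleftrightarrow>
     (\<forall>i<k. \<forall>j<k. A i j = A j i) \<and>
     (\<forall>x :: nat \<Rightarrow> real. 0 \<le> (\<Sum>i<k. \<Sum>j<k. x i * A i j * x j))"

definition trace_inner :: "nat \<Rightarrow> (nat \<Rightarrow> nat \<Rightarrow> real) \<Rightarrow> (nat \<Rightarrow> nat \<Rightarrow> real) \<Rightarrow> real" where
  "trace_inner k A B = (\<Sum>i<k. \<Sum>j<k. A i j * B j i)"

definition nonneg_mat :: "nat \<Rightarrow> nat \<Rightarrow> (nat \<Rightarrow> nat \<Rightarrow> real) \<Rightarrow> bool" where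
  "nonneg_mat p q M \<longleftrightarrow> (\<forall>i<p. \<forall>j<q. 0 \<le> M i j)"

definition has_psd_factorization :: "nat \<Rightarrow> nat \<Rightarrow> nat \<Rightarrow> (nat \<Rightarrow> nat \<Rightarrow> real) \<Rightarrow> bool" where
  "has_psd_factorization k p q M \<longleftrightarrow>
     (\<exists>A B :: nat \<Rightarrow> nat \<Rightarrow> nat \<Rightarrow> real.
        (\<forall>i<p. psd_mat k (A i)) \<and> (\<forall>j<q. psd_mat k (B j)) \<and>
        (\<forall>i<p. \<forall>j<q. M i j = trace_inner k (A i) (B j)))"

definition psd_rank :: "nat \<Rightarrow> nat \<Rightarrow> (nat \<Rightarrow> nat \<Rightarrow> real) \<Rightarrow> nat" where
  "psd_rank p q M = (LEAST k. has_psd_factorization k p q M)"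

end

theory Submission
  imports Defs "HOL-Analysis.Analysis"
begin

lemma sum_two:
  fixes f :: "nat \<Rightarrow> real"
  assumes "r < k" "s < k" "r \<noteq> s" "\<And>j. j \<noteq> r \<Longrightarrow> j \<noteq> s \<Longrightarrow> f j = 0"
  shows "(\<Sum>j<k. f j) = f r + f s"
proof -
  have "(\<Sum>j<k. f j) = (\<Sum>j\<in>{r,s}. f j)"
    by (rule sum.mono_neutral_right) (use assms in auto)
  then show ?thesis using assms by simp
qed

lemma sum_one:
  fixes f :: "nat \<Rightarrow> real"
  assumes "r < k" "\<And>j. j < k \<Longrightarrow> j \<noteq> r \<Longrightarrow> f j = 0"
  shows "(\<Sum>j<k. f j) = f r"
proof -
  have "(\<Sum>j<k. f j) = (\<Sum>j\<in>{r}. f j)"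
    by (rule sum.mono_neutral_right) (use assms in auto)
  then show ?thesis using assms by simp
qed

lemma psd_diag:
  assumes "psd_mat k A" "r < k"
  shows "0 \<le> A r r"
proof -
  define x where "x = (\<lambda>i::nat. if i = r then 1 else (0::real))"
  have "0 \<le> (\<Sum>i<k. \<Sum>j<k. x i * A i j * x j)" using assms unfolding psd_mat_def by blast
  also have "(\<Sum>i<k. \<Sum>j<k. x i * A i j * x j) = (\<Sum>j<k. x r * A r j * x j)"
    by (rule sum_one) (use assms in \<open>auto simp: x_def\<close>)
  also have "\<dots> = x r * A r r * x r"
    by (rule sum_one) (use assms in \<open>auto simp: x_def\<close>)
  finally show ?thesis by (simp add: x_def)
qed

lemma psd_quad2:
  assumes "psd_mat k A" "r < k" "s < k" "r \<noteq> s"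
  shows "0 \<le> u * u * A r r + 2 * u * v * A r s + v * v * A s s"
proof -
  define x where "x = (\<lambda>i::nat. if i = r then u else if i = s then v else (0::real))"
  have sym: "A s r = A r s" using assms unfolding psd_mat_def by auto
  have "0 \<le> (\<Sum>i<k. \<Sum>j<k. x i * A i j * x j)" using assms unfolding psd_mat_def by blast
  also have "(\<Sum>i<k. \<Sum>j<k. x i * A i j * x j) = (\<Sum>j<k. x r * A r j * x j) + (\<Sum>j<k. x s * A s j * x j)"
    by (rule sum_two) (use assms in \<open>auto simp: x_def\<close>)
  also have "(\<Sum>j<k. x r * A r j * x j) = x r * A r r * x r + x r * A r s * x s"
    by (rule sum_two) (use assms in \<open>auto simp: x_def\<close>)
  also have "(\<Sum>j<k. x s * A s j * x j) = x s * A s r * x r + x s * A s s * x s"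
    by (rule sum_two) (use assms in \<open>auto simp: x_def\<close>)
  finally show ?thesis using assms sym by (simp add: x_def algebra_simps)
qed

lemma psd_offdiag:
  assumes "psd_mat k A" "r < k" "s < k"
  shows "(A r s)^2 \<le> A r r * A s s"
proof (cases "r = s")
  case True then show ?thesis by (simp add: power2_eq_square)
next
  case False
  note q = psd_quad2[OF assms False]
  have d1: "0 \<le> A r r" "0 \<le> A s s" using psd_diag assms by auto
  show ?thesis
  proof (cases "A s s = 0")
    case True
    have "A r s = 0"
    proof (rule ccontr)
      assume h: "A r s \<noteq> 0"
      have "0 \<le> 1*1*A r r + 2*1*(-(A r r + 1)/(2*A r s))*A r s + (-(A r r + 1)/(2*A r s))*(-(A r r + 1)/(2*A r s))*A s s"
        by (rule q)
      also have "\<dots> = -1" using h True by (simp add: field_simps)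
      finally show False by simp
    qed
    then show ?thesis using d1 True by simp
  next
    case False
    have "0 \<le> (A s s)*(A s s)*A r r + 2*(A s s)*(- A r s)*A r s + (- A r s)*(- A r s)*A s s"
      by (rule q)
    also have "\<dots> = A s s * (A r r * A s s - (A r s)^2)" by (simp add: algebra_simps power2_eq_square)
    finally have "0 \<le> A s s * (A r r * A s s - (A r s)^2)" .
    then have "0 \<le> A r r * A s s - (A r s)^2" using False d1
      by (simp add: zero_le_mult_iff)
    then show ?thesis by simp
  qed
qed

lemma psd_zero_row:
  assumes "psd_mat k A" "r < k" "s < k" "A r r = 0"
  shows "A r s = 0" "A s r = 0"
proof -
  have "(A r s)^2 \<le> 0" using psd_offdiag[OF assms(1-3)] assms(4) by simp
  then show "A r s = 0" by simp
  then show "A s r = 0" using assms unfolding psd_mat_def by auto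
qed

lemma psd_abs_bound:
  assumes "psd_mat k A" "r < k" "s < k" "A r r \<le> C" "A s s \<le> C"
  shows "\<bar>A r s\<bar> \<le> C"
proof -
  have d: "0 \<le> A r r" "0 \<le> A s s" using psd_diag assms by auto
  have "(A r s)^2 \<le> A r r * A s s" by (rule psd_offdiag[OF assms(1-3)])
  also have "\<dots> \<le> C * C" using d assms by (intro mult_mono) auto
  finally have "\<bar>A r s\<bar>^2 \<le> C^2" by (simp add: power2_eq_square)
  moreover have "0 \<le> C" using d assms by linarith
  ultimately show ?thesis using abs_le_square_iff power2_le_imp_le by blast
qed

definition cm :: "nat \<Rightarrow> (nat \<Rightarrow> nat \<Rightarrow> real) \<Rightarrow> (nat \<Rightarrow> nat \<Rightarrow> real) \<Rightarrow> (nat \<Rightarrow> nat \<Rightarrow> real)" where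
  "cm k G X = (\<lambda>i j. \<Sum>a<k. \<Sum>b<k. G i a * X a b * G j b)"

lemma times_if_one: "(x::real) * (if P then 1 else 0) = (if P then x else 0)" by simp

lemma swap4:
  "(\<Sum>i\<in>I. \<Sum>j\<in>J. \<Sum>a\<in>K. \<Sum>b\<in>L. f i j a b) = (\<Sum>a\<in>K. \<Sum>b\<in>L. \<Sum>i\<in>I. \<Sum>j\<in>J. f i j a b :: real)"
proof -
  have "(\<Sum>i\<in>I. \<Sum>j\<in>J. \<Sum>a\<in>K. \<Sum>b\<in>L. f i j a b) = (\<Sum>i\<in>I. \<Sum>a\<in>K. \<Sum>j\<in>J. \<Sum>b\<in>L. f i j a b)"
    by (rule sum.cong[OF refl], rule sum.swap)
  also have "\<dots> = (\<Sum>a\<in>K. \<Sum>i\<in>I. \<Sum>j\<in>J. \<Sum>b\<in>L. f i j a b)" by (rule sum.swap)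
  also have "\<dots> = (\<Sum>a\<in>K. \<Sum>i\<in>I. \<Sum>b\<in>L. \<Sum>j\<in>J. f i j a b)"
    by (rule sum.cong[OF refl], rule sum.cong[OF refl], rule sum.swap)
  also have "\<dots> = (\<Sum>a\<in>K. \<Sum>b\<in>L. \<Sum>i\<in>I. \<Sum>j\<in>J. f i j a b)"
    by (rule sum.cong[OF refl], rule sum.swap)
  finally show ?thesis .
qed

lemma cm_trace:
  assumes inv: "\<And>b c. b < k \<Longrightarrow> c < k \<Longrightarrow> (\<Sum>j<k. G j b * H j c) = (if b = c then 1 else 0)"
  shows "trace_inner k (cm k G A) (cm k H B) = trace_inner k A B"
proof -
  have inner: "(\<Sum>i<k. \<Sum>j<k. G i a * G j b * cm k H B j i) = B b a" if ab: "a < k" "b < k" for a b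
  proof -
    have "(\<Sum>i<k. \<Sum>j<k. G i a * G j b * cm k H B j i)
        = (\<Sum>i<k. \<Sum>j<k. \<Sum>c<k. \<Sum>d<k. B c d * ((G j b * H j c) * (G i a * H i d)))"
      by (simp add: cm_def sum_distrib_left mult_ac)
    also have "\<dots> = (\<Sum>c<k. \<Sum>d<k. \<Sum>i<k. \<Sum>j<k. B c d * ((G j b * H j c) * (G i a * H i d)))"
      by (rule swap4)
    also have "\<dots> = (\<Sum>c<k. \<Sum>d<k. \<Sum>j<k. \<Sum>i<k. B c d * ((G j b * H j c) * (G i a * H i d)))"
      by (rule sum.cong[OF refl], rule sum.cong[OF refl], rule sum.swap)
    also have "\<dots> = (\<Sum>c<k. \<Sum>d<k. B c d * ((\<Sum>j<k. G j b * H j c) * (\<Sum>i<k. G i a * H i d)))"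
      by (simp add: sum_distrib_left sum_distrib_right mult_ac)
    also have "\<dots> = (\<Sum>c<k. \<Sum>d<k. B c d * ((if b = c then 1 else 0) * (if a = d then 1 else 0)))"
      using ab by (intro sum.cong refl) (simp add: inv)
    also have "\<dots> = (\<Sum>c<k. if c = b then (\<Sum>d<k. if d = a then B c d else 0) else 0)"
      by (rule sum.cong[OF refl]) (auto intro!: sum.cong simp: times_if_one)
    also have "\<dots> = (if b = b then (\<Sum>d<k. if d = a then B b d else 0) else 0)"
      by (rule sum_one) (use ab in auto)
    also have "\<dots> = (if a = a then B b a else 0)"
      using ab by simp
    also have "\<dots> = B b a" by simp
    finally show ?thesis .
  qed
  have "trace_inner k (cm k G A) (cm k H B) = (\<Sum>i<k. \<Sum>j<k. \<Sum>a<k. \<Sum>b<k. A a b * (G i a * G j b * cm k H B j i))"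
    unfolding trace_inner_def by (simp add: cm_def sum_distrib_right mult_ac)
  also have "\<dots> = (\<Sum>a<k. \<Sum>b<k. \<Sum>i<k. \<Sum>j<k. A a b * (G i a * G j b * cm k H B j i))"
    by (rule swap4)
  also have "\<dots> = (\<Sum>a<k. \<Sum>b<k. A a b * (\<Sum>i<k. \<Sum>j<k. G i a * G j b * cm k H B j i))"
    by (simp add: sum_distrib_left)
  also have "\<dots> = (\<Sum>a<k. \<Sum>b<k. A a b * B b a)"
    by (intro sum.cong refl) (simp add: inner)
  finally show ?thesis unfolding trace_inner_def .
qed

lemma cm_psd:
  assumes "psd_mat k A"
  shows "psd_mat k (cm k G A)"
  unfolding psd_mat_def
proof (intro conjI allI impI)
  fix i j assume "i < k" "j < k"
  have "cm k G A j i = (\<Sum>b<k. \<Sum>a<k. G j a * A a b * G i b)"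
    unfolding cm_def by (rule sum.swap)
  also have "\<dots> = (\<Sum>a<k. \<Sum>b<k. G i a * A a b * G j b)"
    using assms unfolding psd_mat_def by (intro sum.cong refl) auto
  finally show "cm k G A i j = cm k G A j i" unfolding cm_def by simp
next
  fix x :: "nat \<Rightarrow> real"
  define y where "y = (\<lambda>a. \<Sum>i<k. x i * G i a)"
  have "(\<Sum>i<k. \<Sum>j<k. x i * cm k G A i j * x j) = (\<Sum>i<k. \<Sum>j<k. \<Sum>a<k. \<Sum>b<k. (x i * G i a) * A a b * (G j b * x j))"
    unfolding cm_def by (intro sum.cong refl) (simp add: sum_distrib_left sum_distrib_right mult.assoc)
  also have "\<dots> = (\<Sum>a<k. \<Sum>b<k. \<Sum>i<k. \<Sum>j<k. (x i * G i a) * A a b * (G j b * x j))"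
    by (rule swap4)
  also have "\<dots> = (\<Sum>a<k. \<Sum>b<k. y a * A a b * y b)"
  proof (intro sum.cong refl)
    fix a b
    have e1: "(\<Sum>i<k. x i * G i a * A a b) = y a * A a b"
      unfolding y_def by (simp add: sum_distrib_right)
    have e2: "(\<Sum>j<k. G j b * x j) = y b" unfolding y_def by (simp add: mult.commute)
    have "y a * A a b * y b = (\<Sum>i<k. x i * G i a * A a b) * (\<Sum>j<k. G j b * x j)"
      unfolding e1 e2 ..
    also have "\<dots> = (\<Sum>i<k. \<Sum>j<k. (x i * G i a * A a b) * (G j b * x j))"
      by (rule sum_product)
    finally show "(\<Sum>i<k. \<Sum>j<k. (x i * G i a) * A a b * (G j b * x j)) = y a * A a b * y b"
      by simp
  qed
  finally show "0 \<le> (\<Sum>i<k. \<Sum>j<k. x i * cm k G A i j * x j)"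
    using assms unfolding psd_mat_def by simp
qed

lemma cm_sum:
  "cm k G (\<lambda>a b. \<Sum>i<p. A i a b) x y = (\<Sum>i<p. cm k G (A i) x y)"
proof -
  have "cm k G (\<lambda>a b. \<Sum>i<p. A i a b) x y = (\<Sum>a<k. \<Sum>b<k. \<Sum>i<p. G x a * A i a b * G y b)"
    unfolding cm_def by (simp add: sum_distrib_left sum_distrib_right)
  also have "\<dots> = (\<Sum>a<k. \<Sum>i<p. \<Sum>b<k. G x a * A i a b * G y b)"
    by (rule sum.cong[OF refl], rule sum.swap)
  also have "\<dots> = (\<Sum>i<p. \<Sum>a<k. \<Sum>b<k. G x a * A i a b * G y b)"
    by (rule sum.swap)
  finally show ?thesis unfolding cm_def .
qed

definition fact_of where
  "fact_of k p q M A B \<longleftrightarrow> (\<forall>i<p. psd_mat k (A i)) \<and> (\<forall>j<q. psd_mat k (B j)) \<and>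
      (\<forall>i<p. \<forall>j<q. M i j = trace_inner k (A i) (B j))"

definition SA :: "nat \<Rightarrow> (nat \<Rightarrow> nat \<Rightarrow> nat \<Rightarrow> real) \<Rightarrow> nat \<Rightarrow> nat \<Rightarrow> real" where
  "SA p A = (\<lambda>a b. \<Sum>i<p. A i a b)"

lemma psd_sum:
  assumes "\<And>i. i < p \<Longrightarrow> psd_mat k (A i)"
  shows "psd_mat k (SA p A)"
  unfolding psd_mat_def
proof (intro conjI allI impI)
  fix a b assume "a < k" "b < k"
  then show "SA p A a b = SA p A b a" using assms unfolding SA_def psd_mat_def
    by (intro sum.cong) auto
next
  fix x :: "nat \<Rightarrow> real"
  have "(\<Sum>a<k. \<Sum>b<k. x a * SA p A a b * x b) = (\<Sum>a<k. \<Sum>b<k. \<Sum>i<p. x a * A i a b * x b)"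
    unfolding SA_def by (simp add: sum_distrib_left sum_distrib_right)
  also have "\<dots> = (\<Sum>a<k. \<Sum>i<p. \<Sum>b<k. x a * A i a b * x b)"
    by (rule sum.cong[OF refl], rule sum.swap)
  also have "\<dots> = (\<Sum>i<p. \<Sum>a<k. \<Sum>b<k. x a * A i a b * x b)"
    by (rule sum.swap)
  also have "0 \<le> \<dots>" by (rule sum_nonneg) (use assms in \<open>auto simp: psd_mat_def\<close>)
  finally show "0 \<le> (\<Sum>a<k. \<Sum>b<k. x a * SA p A a b * x b)" .
qed

lemma apply_cm:
  assumes "fact_of k p q M A B"
    and inv: "\<And>b c. b < k \<Longrightarrow> c < k \<Longrightarrow> (\<Sum>j<k. G j b * H j c) = (if b = c then 1 else 0)"
  shows "fact_of k p q M (\<lambda>i. cm k G (A i)) (\<lambda>j. cm k H (B j))"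
  using assms cm_psd cm_trace[OF inv] unfolding fact_of_def by auto

lemma SA_cm: "SA p (\<lambda>i. cm k G (A i)) = cm k G (SA p A)"
  unfolding SA_def by (intro ext) (simp add: cm_sum)

lemma lin2:
  assumes "j < (k::nat)" "m < k"
  shows "(\<Sum>b<k. f b * ((if j = b then 1 else 0) + c * (if b = m then 1 else 0))) = f j + c * (f m :: real)"
proof -
  have "(\<Sum>b<k. f b * ((if j = b then 1 else 0) + c * (if b = m then 1 else 0)))
      = (\<Sum>b<k. (if b = j then f b else 0) + c * (if b = m then f b else 0))"
    by (intro sum.cong) (auto simp: algebra_simps)
  also have "\<dots> = f j + c * f m" using assms by (simp add: sum.distrib sum_distrib_left[symmetric] sum.delta)
  finally show ?thesis .
qed

lemma lin2':
  assumes "j < (k::nat)" "m < k"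
  shows "(\<Sum>b<k. ((if j = b then 1 else 0) + c * (if b = m then 1 else 0)) * f b) = f j + c * (f m :: real)"
  using lin2[OF assms, of f c] by (simp add: mult.commute)

lemma cm_elim:
  assumes "i < k" "j < k" "m < k"
  shows "cm k (\<lambda>i a. (if i = a then 1 else 0) + \<beta> i * (if a = m then 1 else 0)) X i j
       = X i j + \<beta> j * X i m + \<beta> i * X m j + \<beta> i * \<beta> j * X m m"
proof -
  have "cm k (\<lambda>i a. (if i = a then 1 else 0) + \<beta> i * (if a = m then 1 else 0)) X i j
     = (\<Sum>a<k. ((if i = a then 1 else 0) + \<beta> i * (if a = m then 1 else 0)) *
          (\<Sum>b<k. X a b * ((if j = b then 1 else 0) + \<beta> j * (if b = m then 1 else 0))))"
    unfolding cm_def by (simp add: sum_distrib_left mult.assoc)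
  also have "\<dots> = (\<Sum>a<k. ((if i = a then 1 else 0) + \<beta> i * (if a = m then 1 else 0)) *
          (X a j + \<beta> j * X a m))"
    using assms by (simp add: lin2)
  also have "\<dots> = (X i j + \<beta> j * X i m) + \<beta> i * (X m j + \<beta> j * X m m)"
    by (rule lin2'[OF assms(1) assms(3)])
  finally show ?thesis by (simp add: algebra_simps)
qed

lemma elim_inv:
  assumes "b < (k::nat)" "c < k" "m < k" "\<beta> m = 0"
  shows "(\<Sum>j<k. ((if j = b then 1 else 0) + \<beta> j * (if b = m then 1 else 0)) *
            ((if j = c then 1 else 0) - (if j = m then 1 else 0) * \<beta> c)) = (if b = c then 1 else (0::real))"
proof -
  have "(\<Sum>j<k. ((if j = b then 1 else 0) + \<beta> j * (if b = m then 1 else 0)) *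
            ((if j = c then 1 else 0) - (if j = m then 1 else 0) * \<beta> c))
    = (\<Sum>j<k. (if j = b then (if b = c then 1 else 0) - (if b = m then 1 else 0) * \<beta> c else 0)
          + (if b = m then 1 else 0) * ((if j = c then \<beta> c else 0) - (if j = m then \<beta> m * \<beta> c else 0)))"
    by (intro sum.cong) (auto simp: algebra_simps)
  also have "\<dots> = (if b = c then 1 else 0) - (if b = m then 1 else 0) * \<beta> c
       + (if b = m then 1 else 0) * (\<beta> c - \<beta> m * \<beta> c)"
    using assms by (simp add: sum.distrib sum_subtractf sum_distrib_left[symmetric] sum.delta)
  also have "\<dots> = (if b = c then 1 else 0)" using assms by simp
  finally show ?thesis .
qed

lemma elim_step:
  assumes F: "fact_of k p q M A B" and m: "m < k"
    and Z: "\<forall>r<m. \<forall>s<k. s \<noteq> r \<longrightarrow> SA p A r s = 0"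
  shows "\<exists>A' B'. fact_of k p q M A' B' \<and> (\<forall>r<Suc m. \<forall>s<k. s \<noteq> r \<longrightarrow> SA p A' r s = 0)"
proof -
  define S where "S = SA p A"
  have Spsd: "psd_mat k S" unfolding S_def using F psd_sum unfolding fact_of_def by blast
  have Ssym: "\<And>a b. a < k \<Longrightarrow> b < k \<Longrightarrow> S a b = S b a" using Spsd unfolding psd_mat_def by blast
  show ?thesis
  proof (cases "S m m = 0")
    case True
    have "S m s = 0" if "s < k" for s using psd_zero_row(1)[OF Spsd m that True] .
    then have "\<forall>r<Suc m. \<forall>s<k. s \<noteq> r \<longrightarrow> SA p A r s = 0"
      using Z unfolding S_def by (metis less_Suc_eq)
    then show ?thesis using F by blast
  next
    case False
    define d where "d = S m m"
    define \<beta> where "\<beta> = (\<lambda>i. if i = m then 0 else - S i m / d)"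
    define G where "G = (\<lambda>i a. (if i = a then 1 else 0) + \<beta> i * (if a = m then 1 else (0::real)))"
    define H where "H = (\<lambda>i a. (if i = a then 1 else 0) - (if i = m then 1 else 0) * \<beta> a)"
    have inv: "(\<Sum>j<k. G j b * H j c) = (if b = c then 1 else 0)" if "b < k" "c < k" for b c
      unfolding G_def H_def by (rule elim_inv) (use m that in \<open>auto simp: \<beta>_def\<close>)
    have F': "fact_of k p q M (\<lambda>i. cm k G (A i)) (\<lambda>j. cm k H (B j))"
      by (rule apply_cm[OF F inv])
    have S': "SA p (\<lambda>i. cm k G (A i)) = cm k G S" unfolding S_def by (rule SA_cm)
    have "SA p (\<lambda>i. cm k G (A i)) r s = 0" if r: "r < Suc m" and s: "s < k" "s \<noteq> r" for r s
    proof -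
      have rk: "r < k" using r m by simp
      have e: "cm k G S r s = S r s + \<beta> s * S r m + \<beta> r * S m s + \<beta> r * \<beta> s * S m m"
        unfolding G_def by (rule cm_elim[OF rk s(1) m])
      show ?thesis
      proof (cases "r = m")
        case True
        then show ?thesis using S' e s Ssym[OF s(1) m] False by (simp add: \<beta>_def d_def)
      next
        case rm: False
        then have "r < m" using r by simp
        then have "S r m = 0" "S r s = 0" using Z s rm m unfolding S_def by auto
        then show ?thesis using S' e rm by (simp add: \<beta>_def)
      qed
    qed
    then show ?thesis using F' by blast
  qed
qed

lemma norm_all:
  assumes F: "fact_of k p q M A B"
  shows "m \<le> k \<Longrightarrow> \<exists>A' B'. fact_of k p q M A' B' \<and> (\<forall>r<m. \<forall>s<k. s \<noteq> r \<longrightarrow> SA p A' r s = 0)"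
proof (induction m)
  case 0
  then show ?case using F by blast
next
  case (Suc m)
  then obtain A' B' where "fact_of k p q M A' B'" "\<forall>r<m. \<forall>s<k. s \<noteq> r \<longrightarrow> SA p A' r s = 0" by auto
  then show ?case using elim_step[of k p q M A' B' m] Suc.prems by auto
qed

lemma cm_diag:
  assumes "i < k" "j < k"
  shows "cm k (\<lambda>i a. if i = a then g i else 0) X i j = g i * X i j * g j"
proof -
  have inner: "(\<Sum>b<k. (if i = a then g i else 0) * X a b * (if j = b then g j else 0))
      = (if a = i then g i * X a j * g j else 0)" for a
  proof -
    have "(\<Sum>b<k. (if i = a then g i else 0) * X a b * (if j = b then g j else 0))
       = (\<Sum>b<k. if b = j then (if i = a then g i else 0) * X a b * g j else 0)"
      by (intro sum.cong refl) auto
    then show ?thesis using assms by (simp add: sum.delta)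
  qed
  have "cm k (\<lambda>i a. if i = a then g i else 0) X i j
     = (\<Sum>a<k. if a = i then g i * X a j * g j else 0)"
    unfolding cm_def using inner by simp
  then show ?thesis using assms by (simp add: sum.delta)
qed

lemma scale_step:
  assumes F: "fact_of k p q M A B"
    and Z: "\<forall>r<k. \<forall>s<k. s \<noteq> r \<longrightarrow> SA p A r s = 0"
  shows "\<exists>A' B'. fact_of k p q M A' B' \<and> (\<forall>r<k. \<forall>s<k. s \<noteq> r \<longrightarrow> SA p A' r s = 0)
            \<and> (\<forall>r<k. SA p A' r r = 0 \<or> SA p A' r r = 1)"
proof -
  define S where "S = SA p A"
  have Spsd: "psd_mat k S" unfolding S_def using F psd_sum unfolding fact_of_def by blast
  define g where "g = (\<lambda>r. if S r r > 0 then 1 / sqrt (S r r) else 1)"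
  have g0: "g r \<noteq> 0" for r unfolding g_def by auto
  define G where "G = (\<lambda>i a. if i = a then g i else (0::real))"
  define H where "H = (\<lambda>i a. if i = a then 1 / g i else (0::real))"
  have inv: "(\<Sum>j<k. G j b * H j c) = (if b = c then 1 else 0)" if "b < k" "c < k" for b c
  proof -
    have "(\<Sum>j<k. G j b * H j c) = (\<Sum>j<k. if j = b then (if b = c then 1 else 0) else 0)"
      unfolding G_def H_def using g0 by (intro sum.cong refl) auto
    then show ?thesis using that by (simp add: sum.delta)
  qed
  have F': "fact_of k p q M (\<lambda>i. cm k G (A i)) (\<lambda>j. cm k H (B j))"
    by (rule apply_cm[OF F inv])
  have S': "SA p (\<lambda>i. cm k G (A i)) = cm k G S" unfolding S_def by (rule SA_cm)
  have e: "SA p (\<lambda>i. cm k G (A i)) r s = g r * S r s * g s" if "r < k" "s < k" for r s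
    using S' cm_diag[OF that, of g S] unfolding G_def by simp
  have 1: "\<forall>r<k. \<forall>s<k. s \<noteq> r \<longrightarrow> SA p (\<lambda>i. cm k G (A i)) r s = 0"
    using e Z unfolding S_def by auto
  have 2: "SA p (\<lambda>i. cm k G (A i)) r r = 0 \<or> SA p (\<lambda>i. cm k G (A i)) r r = 1" if r: "r < k" for r
  proof (cases "S r r > 0")
    case True
    then have "g r * S r r * g r = 1" unfolding g_def
      by (simp add: field_simps)
    then show ?thesis using e[OF r r] by simp
  next
    case False
    then have "S r r = 0" using psd_diag[OF Spsd r] by simp
    then show ?thesis using e[OF r r] by simp
  qed
  show ?thesis using F' 1 2 by blast
qed

lemma trace_lin:
  "(\<Sum>i<p. trace_inner k (A i) X) = trace_inner k (SA p A) X"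
proof -
  have "(\<Sum>i<p. trace_inner k (A i) X) = (\<Sum>i<p. \<Sum>a<k. \<Sum>b<k. A i a b * X b a)"
    unfolding trace_inner_def ..
  also have "\<dots> = (\<Sum>a<k. \<Sum>i<p. \<Sum>b<k. A i a b * X b a)" by (rule sum.swap)
  also have "\<dots> = (\<Sum>a<k. \<Sum>b<k. \<Sum>i<p. A i a b * X b a)"
    by (rule sum.cong[OF refl], rule sum.swap)
  also have "\<dots> = trace_inner k (SA p A) X"
    unfolding trace_inner_def SA_def by (simp add: sum_distrib_right)
  finally show ?thesis .
qed

lemma normalize:
  fixes k p q :: nat and M :: "nat \<Rightarrow> nat \<Rightarrow> real"
  assumes F0: "fact_of k p q M A0 B0"
  shows "\<exists>A B. fact_of k p q M A B \<and> (\<forall>i<p. \<forall>a<k. \<forall>b<k. \<bar>A i a b\<bar> \<le> 1)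
      \<and> (\<forall>j<q. \<forall>a<k. \<forall>b<k. \<bar>B j a b\<bar> \<le> (\<Sum>i<p. M i j))"
proof -
  obtain A1 B1 where F1: "fact_of k p q M A1 B1" and Z1: "\<forall>r<k. \<forall>s<k. s \<noteq> r \<longrightarrow> SA p A1 r s = 0"
    using norm_all[OF F0, of k] by auto
  obtain A B' where F: "fact_of k p q M A B'" and Z: "\<forall>r<k. \<forall>s<k. s \<noteq> r \<longrightarrow> SA p A r s = 0"
      and D01: "\<forall>r<k. SA p A r r = 0 \<or> SA p A r r = 1"
    using scale_step[OF F1 Z1] by auto
  define D where "D = SA p A"
  have Apsd: "\<And>i. i < p \<Longrightarrow> psd_mat k (A i)" and B'psd: "\<And>j. j < q \<Longrightarrow> psd_mat k (B' j)"
    and tr: "\<And>i j. i < p \<Longrightarrow> j < q \<Longrightarrow> M i j = trace_inner k (A i) (B' j)"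
    using F unfolding fact_of_def by auto
  have Adiag_le: "A i a a \<le> D a a" if "i < p" "a < k" for i a
    unfolding D_def SA_def
    by (rule member_le_sum) (use that Apsd psd_diag in auto)
  have Azero: "A i a b = 0" if "i < p" "a < k" "b < k" "D a a = 0 \<or> D b b = 0" for i a b
  proof -
    have d0: "A i c c = 0" if "D c c = 0" "c < k" for c
      using Adiag_le[OF \<open>i < p\<close> \<open>c < k\<close>] psd_diag[OF Apsd[OF \<open>i < p\<close>] \<open>c < k\<close>] that by simp
    show ?thesis using that(4)
    proof
      assume "D a a = 0" then show ?thesis using psd_zero_row(1)[OF Apsd[OF \<open>i < p\<close>] \<open>a < k\<close> \<open>b < k\<close>] d0 that by auto
    next
      assume "D b b = 0" then show ?thesis using psd_zero_row(2)[OF Apsd[OF \<open>i < p\<close>] \<open>b < k\<close> \<open>a < k\<close>] d0 that by auto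
    qed
  qed
  define B where "B = (\<lambda>j a b. if D a a = 0 \<or> D b b = 0 then 0 else B' j a b)"
  have Bpsd: "psd_mat k (B j)" if j: "j < q" for j
    unfolding psd_mat_def
  proof (intro conjI allI impI)
    fix a b assume "a < k" "b < k"
    then show "B j a b = B j b a" using B'psd[OF j] unfolding B_def psd_mat_def by auto
  next
    fix x :: "nat \<Rightarrow> real"
    define y where "y = (\<lambda>a. if D a a = 0 then 0 else x a)"
    have "(\<Sum>a<k. \<Sum>b<k. x a * B j a b * x b) = (\<Sum>a<k. \<Sum>b<k. y a * B' j a b * y b)"
      unfolding B_def y_def by (intro sum.cong refl) auto
    also have "0 \<le> \<dots>" using B'psd[OF j] unfolding psd_mat_def by blast
    finally show "0 \<le> (\<Sum>a<k. \<Sum>b<k. x a * B j a b * x b)" .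
  qed
  have trB: "M i j = trace_inner k (A i) (B j)" if "i < p" "j < q" for i j
  proof -
    have "trace_inner k (A i) (B j) = trace_inner k (A i) (B' j)"
      unfolding trace_inner_def B_def using Azero[OF that(1)] by (intro sum.cong refl) auto
    then show ?thesis using tr that by simp
  qed
  have Fnew: "fact_of k p q M A B" unfolding fact_of_def using Apsd Bpsd trB by auto
  have boundA: "\<bar>A i a b\<bar> \<le> 1" if "i < p" "a < k" "b < k" for i a b
  proof (rule psd_abs_bound[OF Apsd[OF that(1)] that(2,3)])
    show "A i a a \<le> 1" using Adiag_le[OF that(1,2)] D01 that unfolding D_def by force
    show "A i b b \<le> 1" using Adiag_le[OF that(1,3)] D01 that unfolding D_def by force
  qed
  have boundB: "\<bar>B j a b\<bar> \<le> (\<Sum>i<p. M i j)" if "j < q" "a < k" "b < k" for j a b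
  proof -
    have "(\<Sum>i<p. M i j) = (\<Sum>i<p. trace_inner k (A i) (B j))" using trB that by simp
    also have "\<dots> = trace_inner k D (B j)" unfolding D_def by (rule trace_lin)
    also have "\<dots> = (\<Sum>c<k. D c c * B j c c)" unfolding trace_inner_def
    proof (intro sum.cong refl)
      fix c assume "c \<in> {..<k}"
      then show "(\<Sum>d<k. D c d * B j d c) = D c c * B j c c"
        by (intro sum_one) (use Z in \<open>auto simp: D_def\<close>)
    qed
    also have "\<dots> = (\<Sum>c<k. B j c c)"
      by (intro sum.cong refl) (use D01 in \<open>auto simp: B_def D_def\<close>)
    finally have sumeq: "(\<Sum>i<p. M i j) = (\<Sum>c<k. B j c c)" .
    have "B j c c \<le> (\<Sum>i<p. M i j)" if "c < k" for c
      unfolding sumeq by (rule member_le_sum) (use that Bpsd[OF \<open>j < q\<close>] psd_diag in auto)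
    then show ?thesis using psd_abs_bound[OF Bpsd[OF that(1)] that(2,3)] that by auto
  qed
  show ?thesis using Fnew boundA boundB by blast
qed

lemma has_fact_iff: "has_psd_factorization k p q M \<longleftrightarrow> (\<exists>A B. fact_of k p q M A B)"
  unfolding has_psd_factorization_def fact_of_def ..

lemma sum_pad:
  fixes f :: "nat \<Rightarrow> real"
  assumes "k0 \<le> k" "\<And>a. k0 \<le> a \<Longrightarrow> a < k \<Longrightarrow> f a = 0"
  shows "(\<Sum>a<k. f a) = (\<Sum>a<k0. f a)"
  by (rule sum.mono_neutral_right) (use assms in auto)

lemma pad:
  assumes "has_psd_factorization k0 p q M" "k0 \<le> k"
  shows "has_psd_factorization k p q M"
proof -
  obtain A B where A: "\<forall>i<p. psd_mat k0 (A i)" and B: "\<forall>j<q. psd_mat k0 (B j)"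
    and T: "\<forall>i<p. \<forall>j<q. M i j = trace_inner k0 (A i) (B j)"
    using assms(1) unfolding has_psd_factorization_def by blast
  define P where "P = (\<lambda>(X::nat \<Rightarrow> nat \<Rightarrow> real) a b. if a < k0 \<and> b < k0 then X a b else 0)"
  have Ppsd: "psd_mat k (P X)" if "psd_mat k0 X" for X
    unfolding psd_mat_def
  proof (intro conjI allI impI)
    fix a b assume "a < k" "b < k"
    then show "P X a b = P X b a" using that unfolding P_def psd_mat_def by auto
  next
    fix x :: "nat \<Rightarrow> real"
    have "(\<Sum>a<k. \<Sum>b<k. x a * P X a b * x b) = (\<Sum>a<k0. \<Sum>b<k. x a * P X a b * x b)"
      by (rule sum_pad) (use assms(2) in \<open>auto simp: P_def\<close>)
    also have "\<dots> = (\<Sum>a<k0. \<Sum>b<k0. x a * P X a b * x b)"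
      by (intro sum.cong refl sum_pad) (use assms(2) in \<open>auto simp: P_def\<close>)
    also have "\<dots> = (\<Sum>a<k0. \<Sum>b<k0. x a * X a b * x b)"
      by (intro sum.cong refl) (auto simp: P_def)
    also have "0 \<le> \<dots>" using that unfolding psd_mat_def by blast
    finally show "0 \<le> (\<Sum>a<k. \<Sum>b<k. x a * P X a b * x b)" .
  qed
  have Ptr: "trace_inner k (P X) (P Y) = trace_inner k0 X Y" for X Y
  proof -
    have "trace_inner k (P X) (P Y) = (\<Sum>a<k0. \<Sum>b<k. P X a b * P Y b a)"
      unfolding trace_inner_def by (rule sum_pad) (use assms(2) in \<open>auto simp: P_def\<close>)
    also have "\<dots> = (\<Sum>a<k0. \<Sum>b<k0. P X a b * P Y b a)"
      by (intro sum.cong refl sum_pad) (use assms(2) in \<open>auto simp: P_def\<close>)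
    also have "\<dots> = trace_inner k0 X Y"
      unfolding trace_inner_def by (intro sum.cong refl) (auto simp: P_def)
    finally show ?thesis .
  qed
  show ?thesis unfolding has_psd_factorization_def
    by (rule exI[of _ "\<lambda>i. P (A i)"], rule exI[of _ "\<lambda>j. P (B j)"]) (use A B T Ppsd Ptr in auto)
qed

lemma exists_fact:
  assumes "nonneg_mat p q M"
  shows "has_psd_factorization q p q M"
proof -
  define A where "A = (\<lambda>i a b. if a = b then M i a else (0::real))"
  define B where "B = (\<lambda>(j::nat) a b. if a = j \<and> b = j then 1 else (0::real))"
  have Apsd: "psd_mat q (A i)" if "i < p" for i
    unfolding psd_mat_def
  proof (intro conjI allI impI)
    fix a b show "A i a b = A i b a" unfolding A_def by auto
  next
    fix x :: "nat \<Rightarrow> real"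
    have "(\<Sum>a<q. \<Sum>b<q. x a * A i a b * x b) = (\<Sum>a<q. x a * A i a a * x a)"
      by (intro sum.cong refl sum_one) (auto simp: A_def)
    also have "0 \<le> \<dots>" using assms that unfolding nonneg_mat_def A_def
      by (intro sum_nonneg) (auto simp: mult.commute[of _ "M _ _"] mult.assoc)
    finally show "0 \<le> (\<Sum>a<q. \<Sum>b<q. x a * A i a b * x b)" .
  qed
  have Bpsd: "psd_mat q (B j)" if "j < q" for j
    unfolding psd_mat_def
  proof (intro conjI allI impI)
    fix a b show "B j a b = B j b a" unfolding B_def by auto
  next
    fix x :: "nat \<Rightarrow> real"
    have "(\<Sum>a<q. \<Sum>b<q. x a * B j a b * x b) = (\<Sum>b<q. x j * B j j b * x b)"
      by (rule sum_one) (use that in \<open>auto simp: B_def\<close>)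
    also have "\<dots> = x j * B j j j * x j"
      by (rule sum_one) (use that in \<open>auto simp: B_def\<close>)
    finally show "0 \<le> (\<Sum>a<q. \<Sum>b<q. x a * B j a b * x b)" by (simp add: B_def)
  qed
  have T: "M i j = trace_inner q (A i) (B j)" if "i < p" "j < q" for i j
  proof -
    have "trace_inner q (A i) (B j) = (\<Sum>b<q. A i j b * B j b j)"
      unfolding trace_inner_def by (rule sum_one) (use that in \<open>auto simp: B_def\<close>)
    also have "\<dots> = A i j j * B j j j"
      by (rule sum_one) (use that in \<open>auto simp: B_def\<close>)
    finally show ?thesis by (simp add: A_def B_def)
  qed
  show ?thesis unfolding has_psd_factorization_def using Apsd Bpsd T by blast
qed

lemma rank_fact:
  assumes "nonneg_mat p q N" "psd_rank p q N \<le> k"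
  shows "has_psd_factorization k p q N"
proof -
  have "has_psd_factorization (psd_rank p q N) p q N"
    unfolding psd_rank_def by (rule LeastI_ex) (use exists_fact[OF assms(1)] in blast)
  then show ?thesis using pad assms(2) by blast
qed

lemma subseq_conv:
  fixes f :: "nat \<Rightarrow> 'x \<Rightarrow> real"
  assumes "finite F" "\<And>x. x \<in> F \<Longrightarrow> \<exists>C. \<forall>n. \<bar>f n x\<bar> \<le> C"
  shows "\<exists>r. strict_mono r \<and> (\<forall>x\<in>F. \<exists>l. (\<lambda>n. f (r n) x) \<longlonglongrightarrow> l)"
  using assms
proof (induction F rule: finite_induct)
  case empty
  then show ?case by (auto intro: exI[of _ id] simp: strict_mono_def)
next
  case (insert x F)
  then obtain r1 where r1: "strict_mono r1" "\<forall>y\<in>F. \<exists>l. (\<lambda>n. f (r1 n) y) \<longlonglongrightarrow> l" by auto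
  obtain C where C: "\<forall>n. \<bar>f n x\<bar> \<le> C" using insert.prems by blast
  have "bounded (range (\<lambda>n. f (r1 n) x))"
    unfolding bounded_iff using C by auto
  then obtain l r2 where r2: "strict_mono (r2::nat \<Rightarrow> nat)" "((\<lambda>n. f (r1 n) x) \<circ> r2) \<longlonglongrightarrow> l"
    using bounded_imp_convergent_subsequence by blast
  have "strict_mono (r1 \<circ> r2)" using r1(1) r2(1) by (rule strict_mono_o)
  moreover have "\<forall>y\<in>insert x F. \<exists>l. (\<lambda>n. f ((r1 \<circ> r2) n) y) \<longlonglongrightarrow> l"
  proof
    fix y assume "y \<in> insert x F"
    then show "\<exists>l. (\<lambda>n. f ((r1 \<circ> r2) n) y) \<longlonglongrightarrow> l"
    proof
      assume "y = x" then show ?thesis using r2(2) by (auto simp: o_def)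
    next
      assume "y \<in> F"
      then obtain l' where "(\<lambda>n. f (r1 n) y) \<longlonglongrightarrow> l'" using r1(2) by blast
      from LIMSEQ_subseq_LIMSEQ[OF this r2(1)] show ?thesis by (auto simp: o_def)
    qed
  qed
  ultimately show ?case by blast
qed

theorem theorem2p9:
  fixes p q k :: nat
    and Ms :: "nat \<Rightarrow> nat \<Rightarrow> nat \<Rightarrow> real"
    and M :: "nat \<Rightarrow> nat \<Rightarrow> real"
  assumes "\<And>n. nonneg_mat p q (Ms n)"
    and "nonneg_mat p q M"
    and "\<And>i j. i < p \<Longrightarrow> j < q \<Longrightarrow> (\<lambda>n. Ms n i j) \<longlonglongrightarrow> M i j"
    and "\<And>n. psd_rank p q (Ms n) \<le> k"
  shows "psd_rank p q M \<le> k"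
proof -
  note conv = assms(3)
  have "\<forall>n. \<exists>AB. fact_of k p q (Ms n) (fst AB) (snd AB) \<and> (\<forall>i<p. \<forall>a<k. \<forall>b<k. \<bar>fst AB i a b\<bar> \<le> 1)
      \<and> (\<forall>j<q. \<forall>a<k. \<forall>b<k. \<bar>snd AB j a b\<bar> \<le> (\<Sum>i<p. Ms n i j))"
  proof
    fix n
    have "has_psd_factorization k p q (Ms n)" using rank_fact assms(1,4) by blast
    then obtain A0 B0 where "fact_of k p q (Ms n) A0 B0" unfolding has_fact_iff by blast
    from normalize[OF this] show "\<exists>AB. fact_of k p q (Ms n) (fst AB) (snd AB) \<and> (\<forall>i<p. \<forall>a<k. \<forall>b<k. \<bar>fst AB i a b\<bar> \<le> 1)
      \<and> (\<forall>j<q. \<forall>a<k. \<forall>b<k. \<bar>snd AB j a b\<bar> \<le> (\<Sum>i<p. Ms n i j))" by auto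
  qed
  then obtain AB where AB: "\<And>n. fact_of k p q (Ms n) (fst (AB n)) (snd (AB n)) \<and> (\<forall>i<p. \<forall>a<k. \<forall>b<k. \<bar>fst (AB n) i a b\<bar> \<le> 1)
      \<and> (\<forall>j<q. \<forall>a<k. \<forall>b<k. \<bar>snd (AB n) j a b\<bar> \<le> (\<Sum>i<p. Ms n i j))"
    by metis
  define AA where "AA = (\<lambda>n. fst (AB n))"
  define BB where "BB = (\<lambda>n. snd (AB n))"
  have Fn: "fact_of k p q (Ms n) (AA n) (BB n)" for n using AB unfolding AA_def BB_def by blast
  have bA: "\<bar>AA n i a b\<bar> \<le> 1" if "i < p" "a < k" "b < k" for n i a b
    using AB that unfolding AA_def by blast
  have bB: "\<bar>BB n j a b\<bar> \<le> (\<Sum>i<p. Ms n i j)" if "j < q" "a < k" "b < k" for n j a b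
    using AB that unfolding BB_def by blast
  have bBC: "\<exists>C. \<forall>n. \<bar>BB n j a b\<bar> \<le> C" if "j < q" "a < k" "b < k" for j a b
  proof -
    have "(\<lambda>n. \<Sum>i<p. Ms n i j) \<longlonglongrightarrow> (\<Sum>i<p. M i j)"
      by (rule tendsto_sum) (use conv that in auto)
    then have "Bseq (\<lambda>n. \<Sum>i<p. Ms n i j)" by (rule convergent_imp_Bseq[OF convergentI])
    then obtain K where "\<forall>n. norm (\<Sum>i<p. Ms n i j) \<le> K" unfolding Bseq_def by blast
    then show ?thesis using bB[OF that] by (metis abs_le_D1 order_trans real_norm_def)
  qed
  define f where "f = (\<lambda>n. case_sum (\<lambda>(i, a, b). AA n i a b) (\<lambda>(j, a, b). BB n j a b))"
  define Fs where "Fs = Inl ` ({..<p} \<times> {..<k} \<times> {..<k}) \<union> Inr ` ({..<q} \<times> {..<k} \<times> {..<k})"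
  have "finite Fs" unfolding Fs_def by auto
  moreover have "\<exists>C. \<forall>n. \<bar>f n x\<bar> \<le> C" if "x \<in> Fs" for x
  proof -
    have "\<exists>C. \<forall>n. \<bar>AA n i a b\<bar> \<le> C" if "i < p" "a < k" "b < k" for i a b
      using bA[OF that] by blast
    then show ?thesis using that bBC unfolding Fs_def f_def by auto
  qed
  ultimately obtain r where r: "strict_mono r" "\<forall>x\<in>Fs. \<exists>l. (\<lambda>n. f (r n) x) \<longlonglongrightarrow> l"
    using subseq_conv by blast
  define A where "A = (\<lambda>i a b. lim (\<lambda>n. AA (r n) i a b))"
  define B where "B = (\<lambda>j a b. lim (\<lambda>n. BB (r n) j a b))"
  have limA: "(\<lambda>n. AA (r n) i a b) \<longlonglongrightarrow> A i a b" if "i < p" "a < k" "b < k" for i a b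
  proof -
    have "Inl (i, a, b) \<in> Fs" using that unfolding Fs_def by auto
    then obtain l where "(\<lambda>n. AA (r n) i a b) \<longlonglongrightarrow> l" using r(2) unfolding f_def by fastforce
    then show ?thesis unfolding A_def using limI by (metis limI)
  qed
  have limB: "(\<lambda>n. BB (r n) j a b) \<longlonglongrightarrow> B j a b" if "j < q" "a < k" "b < k" for j a b
  proof -
    have "Inr (j, a, b) \<in> Fs" using that unfolding Fs_def by auto
    then obtain l where "(\<lambda>n. BB (r n) j a b) \<longlonglongrightarrow> l" using r(2) unfolding f_def by fastforce
    then show ?thesis unfolding B_def by (metis limI)
  qed
  have psd_lim: "psd_mat k X"
    if lim: "\<And>a b. a < k \<Longrightarrow> b < k \<Longrightarrow> (\<lambda>n. Y n a b) \<longlonglongrightarrow> X a b" and Y: "\<And>n. psd_mat k (Y n)"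
    for X and Y :: "nat \<Rightarrow> nat \<Rightarrow> nat \<Rightarrow> real"
    unfolding psd_mat_def
  proof (intro conjI allI impI)
    fix a b assume ab: "a < k" "b < k"
    have "(\<lambda>n. Y n a b) = (\<lambda>n. Y n b a)" using Y ab unfolding psd_mat_def by auto
    then show "X a b = X b a" using lim[OF ab] lim[OF ab(2,1)] LIMSEQ_unique by metis
  next
    fix x :: "nat \<Rightarrow> real"
    have "(\<lambda>n. \<Sum>a<k. \<Sum>b<k. x a * Y n a b * x b) \<longlonglongrightarrow> (\<Sum>a<k. \<Sum>b<k. x a * X a b * x b)"
      by (intro tendsto_sum tendsto_mult tendsto_const) (use lim in auto)
    moreover have "\<forall>n. 0 \<le> (\<Sum>a<k. \<Sum>b<k. x a * Y n a b * x b)" using Y unfolding psd_mat_def by blast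
    ultimately show "0 \<le> (\<Sum>a<k. \<Sum>b<k. x a * X a b * x b)"
      by (intro LIMSEQ_le_const) auto
  qed
  have Apsd: "psd_mat k (A i)" if "i < p" for i
    by (rule psd_lim[where Y="\<lambda>n. AA (r n) i"]) (use limA that Fn in \<open>auto simp: fact_of_def\<close>)
  have Bpsd: "psd_mat k (B j)" if "j < q" for j
    by (rule psd_lim[where Y="\<lambda>n. BB (r n) j"]) (use limB that Fn in \<open>auto simp: fact_of_def\<close>)
  have T: "M i j = trace_inner k (A i) (B j)" if "i < p" "j < q" for i j
  proof -
    have "(\<lambda>n. trace_inner k (AA (r n) i) (BB (r n) j)) \<longlonglongrightarrow> trace_inner k (A i) (B j)"
      unfolding trace_inner_def
      by (intro tendsto_sum tendsto_mult) (use limA limB that in auto)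
    moreover have "(\<lambda>n. trace_inner k (AA (r n) i) (BB (r n) j)) = (\<lambda>n. Ms (r n) i j)"
      using Fn that unfolding fact_of_def by auto
    moreover have "(\<lambda>n. Ms (r n) i j) \<longlonglongrightarrow> M i j"
      using LIMSEQ_subseq_LIMSEQ[OF conv[OF that] r(1)] by (simp add: o_def)
    ultimately show ?thesis using LIMSEQ_unique by metis
  qed
  have "has_psd_factorization k p q M"
    unfolding has_psd_factorization_def using Apsd Bpsd T by blast
  then show ?thesis unfolding psd_rank_def by (rule Least_le)
qed

end
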